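(* Let $k\geq 3$ be an integer, let $G$ be a graph, and let $G'$ be the graph obtained from $G$ by the $k$-edge-gadget transformation (with respect to any choice of orientations). Then $G$ admits a proper $k$-coloring if and only if $G'$ admits a $k$-partial $k$-coloring.
   Context: A $k$-partial $c$-coloring of a graph $G=(V,E)$ is a map $\gamma:V\to\{1,\dots,c\}$ such that every vertex $v$ has at least $\min\{k,\deg_G(v)\}$ neighbors $u$ with $\gamma(u)\neq\gamma(v)$. The $k$-edge-gadget transformation: given a graph $G$ and, for each edge $\{u,v\}\in E(G)$, a fixed choice of ordered pair $(u,v)$, the graph $G'$ is obtained from $G$ by keeping all vertices of $G$, deleting every edge $\{u,v\}$ of $G$, and for each such edge adding $k$ new vertices $(u,v,1),\dots,(u,v,k)$ that form a clique $K_k$, together with the edges $\{u,(u,v,j)\}$ for $j=1,\dots,k-1$ and the edge $\{v,(u,v,k)\}$. (The gadget vertices of distinct edges are distinct.) *)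

theory Defs
  imports Main
begin

definition graph :: "'a set \<Rightarrow> 'a set set \<Rightarrow> bool" where
  "graph V E \<longleftrightarrow> finite V \<and> (\<forall>e\<in>E. e \<subseteq> V \<and> card e = 2)"

definition nbrs :: "'a set set \<Rightarrow> 'a \<Rightarrow> 'a set" where
  "nbrs E v = {u. {v, u} \<in> E}"

definition deg :: "'a set set \<Rightarrow> 'a \<Rightarrow> nat" where
  "deg E v = card (nbrs E v)"

definition proper_coloring :: "'a set \<Rightarrow> 'a set set \<Rightarrow> nat \<Rightarrow> ('a \<Rightarrow> nat) \<Rightarrow> bool" where
  "proper_coloring V E c \<gamma> \<longleftrightarrow>
     (\<forall>v\<in>V. \<gamma> v \<in> {1..c}) \<and> (\<forall>u v. {u, v} \<in> E \<longrightarrow> \<gamma> u \<noteq> \<gamma> v)"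

definition partial_coloring :: "nat \<Rightarrow> 'a set \<Rightarrow> 'a set set \<Rightarrow> nat \<Rightarrow> ('a \<Rightarrow> nat) \<Rightarrow> bool" where
  "partial_coloring k V E c \<gamma> \<longleftrightarrow>
     (\<forall>v\<in>V. \<gamma> v \<in> {1..c}) \<and>
     (\<forall>v\<in>V. card {u \<in> nbrs E v. \<gamma> u \<noteq> \<gamma> v} \<ge> min k (deg E v))"

definition orientation :: "'a set set \<Rightarrow> ('a \<times> 'a) set \<Rightarrow> bool" where
  "orientation E D \<longleftrightarrow> (\<forall>(u, v)\<in>D. {u, v} \<in> E) \<and>
     (\<forall>e\<in>E. \<exists>!p. p \<in> D \<and> {fst p, snd p} = e)"

datatype 'a gvert = Orig 'a | Gad 'a 'a nat

definition gadget_V :: "nat \<Rightarrow> 'a set \<Rightarrow> ('a \<times> 'a) set \<Rightarrow> 'a gvert set" where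
  "gadget_V k V D = Orig ` V \<union> {Gad u v j | u v j. (u, v) \<in> D \<and> 1 \<le> j \<and> j \<le> k}"

definition gadget_E :: "nat \<Rightarrow> ('a \<times> 'a) set \<Rightarrow> 'a gvert set set" where
  "gadget_E k D =
     {{Gad u v i, Gad u v j} | u v i j. (u, v) \<in> D \<and> 1 \<le> i \<and> i \<le> k \<and> 1 \<le> j \<and> j \<le> k \<and> i \<noteq> j}
   \<union> {{Orig u, Gad u v j} | u v j. (u, v) \<in> D \<and> 1 \<le> j \<and> j \<le> k - 1}
   \<union> {{Orig v, Gad u v k} | u v. (u, v) \<in> D}"

end

theory Submission
  imports Defs
begin

lemma all_differ:
  assumes "finite N" "card N \<le> k" "card {u\<in>N. P u} \<ge> min k (card N)"
  shows "\<forall>u\<in>N. P u"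
proof -
  have "card {u\<in>N. P u} \<ge> card N" using assms by simp
  then have "{u\<in>N. P u} = N"
    using card_seteq[OF assms(1), of "{u\<in>N. P u}"] by blast
  then show ?thesis by blast
qed

lemma gad_nbrs_sub:
  assumes "1 \<le> j" "j \<le> k"
  shows "nbrs (gadget_E k D) (Gad a b j) \<subseteq>
     Gad a b ` ({1..k}-{j}) \<union> {if j < k then Orig a else Orig b}"
proof
  fix y assume "y \<in> nbrs (gadget_E k D) (Gad a b j)"
  then have "{Gad a b j, y} \<in> gadget_E k D" unfolding nbrs_def by simp
  then show "y \<in> Gad a b ` ({1..k}-{j}) \<union> {if j < k then Orig a else Orig b}"
    unfolding gadget_E_def
  proof (elim UnE CollectE exE conjE)
    fix u v i i' assume *: "{Gad a b j, y} = {Gad u v i, Gad u v i'}" "1 \<le> i" "i \<le> k" "1 \<le> i'" "i' \<le> k" "i \<noteq> i'"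
    then show ?thesis by (auto simp: doubleton_eq_iff)
  next
    fix u v i assume *: "{Gad a b j, y} = {Orig u, Gad u v i}" "1 \<le> i" "i \<le> k - 1"
    then show ?thesis using assms by (auto simp: doubleton_eq_iff)
  next
    fix u v assume *: "{Gad a b j, y} = {Orig v, Gad u v k}"
    then show ?thesis using assms by (auto simp: doubleton_eq_iff)
  qed
qed

lemma gad_nbrs_mem:
  assumes "(a,b) \<in> D" "1 \<le> j" "j \<le> k"
  shows "\<And>i. 1 \<le> i \<Longrightarrow> i \<le> k \<Longrightarrow> i \<noteq> j \<Longrightarrow> Gad a b i \<in> nbrs (gadget_E k D) (Gad a b j)"
    and "j < k \<Longrightarrow> Orig a \<in> nbrs (gadget_E k D) (Gad a b j)"
    and "j = k \<Longrightarrow> Orig b \<in> nbrs (gadget_E k D) (Gad a b j)"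
proof -
  fix i assume "1 \<le> i" "i \<le> k" "i \<noteq> j"
  then show "Gad a b i \<in> nbrs (gadget_E k D) (Gad a b j)"
    using assms unfolding nbrs_def gadget_E_def by blast
next
  assume "j < k"
  then have "{Gad a b j, Orig a} = {Orig a, Gad a b j}" "j \<le> k - 1" by auto
  then show "Orig a \<in> nbrs (gadget_E k D) (Gad a b j)"
    using assms unfolding nbrs_def gadget_E_def by blast
next
  assume "j = k"
  then have "{Gad a b j, Orig b} = {Orig b, Gad a b k}" by auto
  then show "Orig b \<in> nbrs (gadget_E k D) (Gad a b j)"
    using assms unfolding nbrs_def gadget_E_def by blast
qed

lemma card_bound:
  assumes "1 \<le> j" "j \<le> k"
  shows "card (Gad a b ` ({1..k}-{j}) \<union> {z}) \<le> k"
proof -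
  have "card (Gad a b ` ({1..k}-{j}) \<union> {z}) \<le> card (Gad a b ` ({1..k}-{j})) + card {z}"
    by (rule card_Un_le)
  also have "card (Gad a b ` ({1..k}-{j})) \<le> card ({1..k}-{j::nat})" by (rule card_image_le) simp
  also have "card ({1..k}-{j::nat}) = k - 1" using assms by simp
  finally show ?thesis using assms by simp
qed

lemma D_props:
  assumes "graph V E" "orientation E D" "(u,v) \<in> D"
  shows "u \<in> V" "v \<in> V" "u \<noteq> v" "{u,v} \<in> E"
proof -
  show e: "{u,v} \<in> E" using assms unfolding orientation_def by auto
  then have "{u,v} \<subseteq> V" "card {u,v} = 2" using assms(1) unfolding graph_def by auto
  then show "u \<in> V" "v \<in> V" "u \<noteq> v" by auto
qed

lemma dir1:
  assumes k: "k \<ge> 3" and g: "graph V E" and o: "orientation E D"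
    and pc: "partial_coloring k (gadget_V k V D) (gadget_E k D) k \<gamma>"
    and ab: "(a,b) \<in> D"
  shows "\<gamma> (Orig a) \<noteq> \<gamma> (Orig b)"
proof -
  let ?E = "gadget_E k D"
  have diff: "\<forall>u\<in>nbrs ?E (Gad a b j). \<gamma> u \<noteq> \<gamma> (Gad a b j)" if j: "1 \<le> j" "j \<le> k" for j
  proof (rule all_differ)
    let ?S = "Gad a b ` ({1..k}-{j}) \<union> {if j < k then Orig a else Orig b}"
    have sub: "nbrs ?E (Gad a b j) \<subseteq> ?S" using gad_nbrs_sub[OF j] .
    show fin: "finite (nbrs ?E (Gad a b j))" by (rule finite_subset[OF sub]) simp
    show "card (nbrs ?E (Gad a b j)) \<le> k"
    proof -
      have "finite ?S" by simp
      then have "card (nbrs ?E (Gad a b j)) \<le> card ?S" using card_mono sub by blast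
      then show ?thesis using card_bound[OF j, of a b "if j < k then Orig a else Orig b"] by linarith
    qed
    have "Gad a b j \<in> gadget_V k V D" using ab j unfolding gadget_V_def by blast
    then show "min k (card (nbrs ?E (Gad a b j))) \<le> card {u \<in> nbrs ?E (Gad a b j). \<gamma> u \<noteq> \<gamma> (Gad a b j)}"
      using pc unfolding partial_coloring_def deg_def by blast
  qed
  have A: "\<gamma> (Gad a b i) \<noteq> \<gamma> (Gad a b j)" if "1 \<le> i" "i \<le> k" "1 \<le> j" "j \<le> k" "i \<noteq> j" for i j
    using diff[of j] gad_nbrs_mem(1)[OF ab, of j k i] that by blast
  have B: "\<gamma> (Orig a) \<noteq> \<gamma> (Gad a b j)" if "1 \<le> j" "j < k" for j
    using diff[of j] gad_nbrs_mem(2)[OF ab, of j k] that by auto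
  have C: "\<gamma> (Orig b) \<noteq> \<gamma> (Gad a b k)"
    using diff[of k] gad_nbrs_mem(3)[OF ab, of k k] k by auto
  have inj: "inj_on (\<lambda>i. \<gamma> (Gad a b i)) {1..k}"
    unfolding inj_on_def
  proof (intro ballI impI)
    fix x y assume "x \<in> {1..k}" "y \<in> {1..k}" "\<gamma> (Gad a b x) = \<gamma> (Gad a b y)"
    then show "x = y" using A[of x y] by auto
  qed
  have img: "(\<lambda>i. \<gamma> (Gad a b i)) ` {1..k} \<subseteq> {1..k}"
  proof
    fix x assume "x \<in> (\<lambda>i. \<gamma> (Gad a b i)) ` {1..k}"
    then obtain i where i: "i \<in> {1..k}" "x = \<gamma> (Gad a b i)" by auto
    have "Gad a b i \<in> gadget_V k V D" using ab i unfolding gadget_V_def by auto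
    then show "x \<in> {1..k}" using pc i unfolding partial_coloring_def by blast
  qed
  have eq: "(\<lambda>i. \<gamma> (Gad a b i)) ` {1..k} = {1..k}"
    using card_image[OF inj] img card_subset_eq[OF finite_atLeastAtMost img] by simp
  have "a \<in> V" using D_props[OF g o ab] by simp
  then have "Orig a \<in> gadget_V k V D" unfolding gadget_V_def by auto
  then have "\<gamma> (Orig a) \<in> {1..k}" using pc unfolding partial_coloring_def by blast
  then obtain i where i: "i \<in> {1..k}" "\<gamma> (Orig a) = \<gamma> (Gad a b i)" using eq by (metis (no_types, lifting) imageE)
  have "i = k"
  proof (rule ccontr)
    assume "i \<noteq> k" then have "i < k" using i by simp
    then show False using B[of i] i by simp
  qed
  then show ?thesis using i C by simp
qed

definition gcol :: "nat \<Rightarrow> ('a \<Rightarrow> nat) \<Rightarrow> 'a gvert \<Rightarrow> nat" where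
  "gcol k c x = (case x of Orig w \<Rightarrow> c w
     | Gad u v j \<Rightarrow> (if j = k then c u else if j < c u then j else j + 1))"

lemma gcol_edge:
  assumes k: "k \<ge> 3" and g: "graph V E" and o: "orientation E D"
    and pc: "proper_coloring V E k c" and e: "e \<in> gadget_E k D"
  shows "\<exists>x y. e = {x,y} \<and> gcol k c x \<noteq> gcol k c y"
proof -
  have cu: "c u \<in> {1..k}" "c v \<in> {1..k}" "c u \<noteq> c v" if "(u,v) \<in> D" for u v
    using D_props[OF g o that] pc unfolding proper_coloring_def by auto
  from e show ?thesis unfolding gadget_E_def
  proof (elim UnE CollectE exE conjE)
    fix u v i j assume *: "e = {Gad u v i, Gad u v j}" "(u, v) \<in> D" "1 \<le> i" "i \<le> k" "1 \<le> j" "j \<le> k" "i \<noteq> j"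
    have "gcol k c (Gad u v i) \<noteq> gcol k c (Gad u v j)"
      using * cu[OF *(2)] unfolding gcol_def by auto
    then show ?thesis using * by blast
  next
    fix u v j assume *: "e = {Orig u, Gad u v j}" "(u, v) \<in> D" "1 \<le> j" "j \<le> k - 1"
    have "gcol k c (Orig u) \<noteq> gcol k c (Gad u v j)"
      using * cu[OF *(2)] k unfolding gcol_def by auto
    then show ?thesis using * by blast
  next
    fix u v assume *: "e = {Orig v, Gad u v k}" "(u, v) \<in> D"
    have "gcol k c (Orig v) \<noteq> gcol k c (Gad u v k)"
      using * cu[OF *(2)] k unfolding gcol_def by auto
    then show ?thesis using * by blast
  qed
qed

theorem lemma3:
  fixes k :: nat and V :: "'a set" and E :: "'a set set" and D :: "('a \<times> 'a) set"
  assumes "k \<ge> 3" and "graph V E" and "orientation E D"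
  shows "(\<exists>\<gamma>. proper_coloring V E k \<gamma>) \<longleftrightarrow>
         (\<exists>\<gamma>. partial_coloring k (gadget_V k V D) (gadget_E k D) k \<gamma>)"
proof
  assume "\<exists>\<gamma>. partial_coloring k (gadget_V k V D) (gadget_E k D) k \<gamma>"
  then obtain \<gamma> where pc: "partial_coloring k (gadget_V k V D) (gadget_E k D) k \<gamma>" by blast
  have "proper_coloring V E k (\<lambda>v. \<gamma> (Orig v))"
    unfolding proper_coloring_def
  proof (intro conjI ballI allI impI)
    fix v assume "v \<in> V"
    then have "Orig v \<in> gadget_V k V D" unfolding gadget_V_def by auto
    then show "\<gamma> (Orig v) \<in> {1..k}" using pc unfolding partial_coloring_def by blast
  next
    fix u v assume uv: "{u, v} \<in> E"
    have "\<forall>e\<in>E. \<exists>!p. p \<in> D \<and> {fst p, snd p} = e" using assms(3) unfolding orientation_def by (rule conjunct2)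
    then have "\<exists>!p. p \<in> D \<and> {fst p, snd p} = {u,v}" using uv by (rule bspec)
    then obtain p where p: "p \<in> D" "{fst p, snd p} = {u, v}" by (meson ex1_implies_ex)
    obtain a b where ab: "p = (a,b)" by (cases p)
    have "\<gamma> (Orig a) \<noteq> \<gamma> (Orig b)" using dir1[OF assms pc, of a b] p(1) ab by simp
    moreover have "{a,b} = {u,v}" using p(2) ab by simp
    ultimately show "\<gamma> (Orig u) \<noteq> \<gamma> (Orig v)" by (auto simp: doubleton_eq_iff)
  qed
  then show "\<exists>\<gamma>. proper_coloring V E k \<gamma>" by blast
next
  assume "\<exists>\<gamma>. proper_coloring V E k \<gamma>"
  then obtain c where pc: "proper_coloring V E k c" by blast
  have nb: "gcol k c y \<noteq> gcol k c x" if "y \<in> nbrs (gadget_E k D) x" for x y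
  proof -
    from that have "{x,y} \<in> gadget_E k D" unfolding nbrs_def by simp
    from gcol_edge[OF assms pc this] show ?thesis by (auto simp: doubleton_eq_iff)
  qed
  have "partial_coloring k (gadget_V k V D) (gadget_E k D) k (gcol k c)"
    unfolding partial_coloring_def
  proof (intro conjI ballI)
    fix x assume "x \<in> gadget_V k V D"
    then show "gcol k c x \<in> {1..k}"
    proof (unfold gadget_V_def, elim UnE imageE CollectE exE conjE)
      fix w assume "w \<in> V" "x = Orig w"
      then show ?thesis using pc unfolding proper_coloring_def gcol_def by auto
    next
      fix u v j assume *: "x = Gad u v j" "(u, v) \<in> D" "1 \<le> j" "j \<le> k"
      have "c u \<in> {1..k}" using D_props[OF assms(2,3) *(2)] pc unfolding proper_coloring_def by auto
      then show ?thesis using * unfolding gcol_def by auto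
    qed
  next
    fix x assume "x \<in> gadget_V k V D"
    have "{u \<in> nbrs (gadget_E k D) x. gcol k c u \<noteq> gcol k c x} = nbrs (gadget_E k D) x"
      using nb by blast
    then show "min k (deg (gadget_E k D) x) \<le> card {u \<in> nbrs (gadget_E k D) x. gcol k c u \<noteq> gcol k c x}"
      unfolding deg_def by simp
  qed
  then show "\<exists>\<gamma>. partial_coloring k (gadget_V k V D) (gadget_E k D) k \<gamma>" by blast
qed

end
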